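(* Let $\mathcal V$ be a vector space partition of $\mathbb F_2^{10}$ such that $\dim(V)$ is even for all $V\in\mathcal V$. Then $\mathcal V$ has one of the types $[10^1]$; $[2^{256},8^1]$; $[2^{320-5i},4^i,6^1]$ for some $0\le i\le64$; or $[2^{341-5i},4^i]$ for some $0\le i\le66$. Vector space partitions of $\mathbb F_2^{10}$ of each of these types exist, except possibly of type $[2^{11},4^{66}]$.
   Context: A vector space partition of $\mathbb F_2^n$ is a set of nonzero subspaces such that every nonzero vector lies in exactly one of them. It has type $[d_1^{n_1},\dots,d_k^{n_k}]$ (with $d_1<\dots<d_k$) if it contains exactly $n_i$ subspaces of dimension $d_i$ and no others. *)

theory Defs
  imports "HOL-Analysis.Analysis" "HOL-Library.Z2" "HOL-Library.Numeral_Type"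
begin

type_synonym F2_10 = "bit ^ 10"

definition vs_partition :: "F2_10 set set \<Rightarrow> bool" where
  "vs_partition P \<longleftrightarrow>
     (\<forall>V\<in>P. vec.subspace V \<and> V \<noteq> {0}) \<and>
     (\<forall>x::F2_10. x \<noteq> 0 \<longrightarrow> (\<exists>!V. V \<in> P \<and> x \<in> V))"

definition vs_type :: "F2_10 set set \<Rightarrow> nat \<Rightarrow> nat" where
  "vs_type P d = card {V \<in> P. vec.dim V = d}"

end

theory Submission
  imports Defs "HOL-Computational_Algebra.Polynomial_Factorial"
begin


lemma UNIV_bit: "(UNIV::bit set) = {0,1}" by (auto intro: bit.exhaust)
lemma card_bit[simp]: "CARD(bit) = 2" by (simp add: UNIV_bit)
lemma card_F: "card (UNIV::F2_10 set) = 1024" by (simp add: CARD_vec card_bit)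
lemma finite_F[simp]: "finite (A::F2_10 set)"
  using card_F card_ge_0_finite finite_subset by (metis subset_UNIV zero_less_numeral)
lemma bit_cases: "(b::bit) = 0 \<or> b = 1" by (cases b) auto
lemma bit_add_self[simp]: "(b::bit) + b = 0" by (cases b) auto
lemma F_add_self[simp]: "(x::F2_10) + x = 0" by (simp add: vec_eq_iff)
lemma F_uminus[simp]: "- (x::F2_10) = x"
  by (metis F_add_self add_left_imp_eq right_minus)
lemma F_diff[simp]: "(x::F2_10) - y = x + y"
  by (metis F_uminus diff_conv_add_uminus)

definition grp :: "'a::ab_group_add set \<Rightarrow> bool" where
  "grp V \<longleftrightarrow> 0 \<in> V \<and> (\<forall>x\<in>V. \<forall>y\<in>V. x + y \<in> V)"

lemma subspace_iff_grp: "vec.subspace V \<longleftrightarrow> grp (V::F2_10 set)"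
  unfolding vec.subspace_def grp_def apply auto
  subgoal for c x by (cases c) auto
  done

lemma card_span:
  assumes "finite B" "vec.independent (B::F2_10 set)"
  shows "card (vec.span B) = 2 ^ card B"
  using assms
proof (induction B rule: finite_induct)
  case empty
  then show ?case by (simp add: vec.span_empty)
next
  case (insert b B)
  have ind: "vec.independent B" and nb: "b \<notin> vec.span B"
    using insert.prems insert.hyps by (auto simp: vec.independent_insert)
  have eq: "vec.span (insert b B) = vec.span B \<union> (\<lambda>x. b + x) ` vec.span B"
  proof
    show "vec.span (insert b B) \<subseteq> vec.span B \<union> (\<lambda>x. b + x) ` vec.span B"
    proof
      fix x assume "x \<in> vec.span (insert b B)"
      then obtain k where k: "x - k *s b \<in> vec.span B" by (auto simp: vec.span_insert)
      show "x \<in> vec.span B \<union> (\<lambda>x. b + x) ` vec.span B"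
      proof (cases k)
        case zero then show ?thesis using k by simp
      next
        case one
        then have "x + b \<in> vec.span B" using k by simp
        moreover have "x = b + (x + b)" by (metis F_add_self add.commute add.left_commute add_0_right)
        ultimately show ?thesis by blast
      qed
    qed
  next
    show "vec.span B \<union> (\<lambda>x. b + x) ` vec.span B \<subseteq> vec.span (insert b B)"
      by (auto intro: vec.span_mono[THEN subsetD] vec.span_add vec.span_base)
  qed
  have disj: "vec.span B \<inter> (\<lambda>x. b + x) ` vec.span B = {}"
  proof (rule ccontr)
    assume "\<not> ?thesis"
    then obtain y where y1: "y \<in> vec.span B" and y2: "b + y \<in> vec.span B" by auto
    have "(b + y) + y \<in> vec.span B" using vec.span_add[OF y2 y1] .
    then show False using nb by (simp add: add.assoc)
  qed
  have "card (vec.span (insert b B)) = card (vec.span B) + card ((\<lambda>x. b + x) ` vec.span B)"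
    unfolding eq by (rule card_Un_disjoint) (use disj in auto)
  also have "card ((\<lambda>x. b + x) ` vec.span B) = card (vec.span B)"
    by (rule card_image) (auto intro: inj_onI)
  finally show ?case using insert ind by simp
qed

lemma card_subspace:
  assumes "vec.subspace (V::F2_10 set)"
  shows "card V = 2 ^ vec.dim V"
proof -
  obtain B where B: "B \<subseteq> V" "vec.independent B" "V \<subseteq> vec.span B" "card B = vec.dim V"
    using vec.basis_exists by blast
  have "vec.span B = V"
    using B assms vec.span_minimal by (metis subset_antisym)
  then show ?thesis using card_span[of B] B by simp
qed

lemma F_cancel[simp]: "(e::F2_10) + (e + x) = x"
  by (simp add: add.assoc[symmetric])

definition dot :: "F2_10 \<Rightarrow> F2_10 \<Rightarrow> bit" where
  "dot u x = (\<Sum>i\<in>UNIV. u$i * x$i)"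

lemma dot_add: "dot u (x + y) = dot u x + dot u y"
  unfolding dot_def by (simp only: vector_add_component distrib_left sum.distrib)
lemma dot_zero[simp]: "dot u 0 = 0"
  by (simp add: dot_def)
lemma dot_comm: "dot u x = dot x u"
  unfolding dot_def by (simp only: mult.commute)

lemma half:
  assumes "grp (V::F2_10 set)"
  shows "2 * card {x\<in>V. dot u x = 1} = card V \<or> card {x\<in>V. dot u x = 1} = 0"
proof (cases "{x\<in>V. dot u x = 1} = {}")
  case True then show ?thesis by simp
next
  case False
  then obtain v where v: "v \<in> V" "dot u v = 1" by auto
  let ?V1 = "{x\<in>V. dot u x = 1}" and ?V0 = "{x\<in>V. dot u x = 0}"
  have split: "V = ?V0 \<union> ?V1" using bit_cases by auto
  have disj: "?V0 \<inter> ?V1 = {}" by auto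
  have img: "(\<lambda>x. v + x) ` ?V0 = ?V1"
  proof
    show "(\<lambda>x. v + x) ` ?V0 \<subseteq> ?V1"
      using v assms by (auto simp: grp_def dot_add)
  next
    show "?V1 \<subseteq> (\<lambda>x. v + x) ` ?V0"
    proof
      fix y assume y: "y \<in> ?V1"
      have "v + y \<in> ?V0" using y v assms by (auto simp: grp_def dot_add)
      moreover have "y = v + (v + y)" by simp
      ultimately show "y \<in> (\<lambda>x. v + x) ` ?V0" by blast
    qed
  qed
  have "card ?V1 = card ?V0"
    unfolding img[symmetric] by (rule card_image) (auto intro: inj_onI)
  moreover have "card V = card ?V0 + card ?V1"
    by (subst split) (rule card_Un_disjoint, auto)
  ultimately show ?thesis by simp
qed

lemma grp_UNIV: "grp (UNIV::F2_10 set)" by (simp add: grp_def)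

lemma N512:
  assumes "x \<noteq> 0"
  shows "card {u. dot u x = 1} = 512"
proof -
  obtain i where i: "x $ i \<noteq> 0" using assms by (auto simp: vec_eq_iff)
  then have xi: "x $ i = 1" using bit_cases by blast
  have "dot (axis i 1) x = (\<Sum>j\<in>UNIV. if j = i then x$i else 0)"
    unfolding dot_def by (rule sum.cong) (auto simp: axis_def)
  then have "dot (axis i 1) x = 1" using xi by simp
  then have ne: "{u\<in>UNIV. dot x u = 1} \<noteq> {}" by (auto simp: dot_comm)
  have "2 * card {u\<in>UNIV. dot x u = 1} = card (UNIV::F2_10 set) \<or> card {u\<in>UNIV. dot x u = 1} = 0"
    by (rule half[OF grp_UNIV])
  then have "card {u\<in>UNIV. dot x u = 1} = 512" using ne card_F by auto
  then show ?thesis by (simp add: dot_comm)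
qed

lemma card_filter_sum: "finite A \<Longrightarrow> card {x\<in>A. P x} = (\<Sum>x\<in>A. if P x then 1 else 0)"
  by (simp add: sum.If_cases Int_def)

lemma sum_h:
  assumes "0 \<in> (V::F2_10 set)"
  shows "(\<Sum>u\<in>UNIV. card {x\<in>V. dot u x = 1}) = 512 * (card V - 1)"
proof -
  have "(\<Sum>u\<in>UNIV. card {x\<in>V. dot u x = 1}) = (\<Sum>u\<in>UNIV. \<Sum>x\<in>V. if dot u x = 1 then 1 else 0)"
    by (simp add: card_filter_sum)
  also have "\<dots> = (\<Sum>x\<in>V. \<Sum>u\<in>UNIV. if dot u x = 1 then 1 else 0)"
    by (rule sum.swap)
  also have "\<dots> = (\<Sum>x\<in>V. card {u. dot u x = 1})"
  proof (rule sum.cong[OF refl])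
    fix x show "(\<Sum>u\<in>UNIV. if dot u x = 1 then 1 else 0) = card {u. dot u x = 1}"
      using card_filter_sum[of UNIV "\<lambda>u. dot u x = 1"] by simp
  qed
  also have "\<dots> = (\<Sum>x\<in>V. if x = 0 then 0 else 512)"
    by (rule sum.cong) (auto simp: N512)
  also have "\<dots> = 512 * card (V - {0})"
    by (simp add: sum.If_cases Diff_eq)
  also have "card (V - {0}) = card V - 1" using assms by simp
  finally show ?thesis .
qed

lemma part_grp: "vs_partition P \<Longrightarrow> V \<in> P \<Longrightarrow> grp V"
  by (auto simp: vs_partition_def subspace_iff_grp)

lemma part_disj:
  assumes "vs_partition P" "V \<in> P" "W \<in> P" "V \<noteq> W"
  shows "V \<inter> W = {0}"
proof -
  have "0 \<in> V" "0 \<in> W" using part_grp[OF assms(1)] assms(2,3) by (auto simp: grp_def)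
  moreover have "x = 0" if "x \<in> V" "x \<in> W" for x
    using assms that unfolding vs_partition_def by metis
  ultimately show ?thesis by auto
qed

lemma prod_bound:
  assumes "grp (V::F2_10 set)" "grp W" "V \<inter> W = {0}"
  shows "card V * card W \<le> 1024"
proof -
  have "inj_on (\<lambda>(v,w). v + w) (V \<times> W)"
  proof (rule inj_onI, clarsimp)
    fix v w v' w' assume a: "v \<in> V" "w \<in> W" "v' \<in> V" "w' \<in> W" "v + w = v' + w'"
    have "v + v' = w + w'"
      by (metis F_cancel a(5) add.assoc add.commute)
    moreover have "v + v' \<in> V" "w + w' \<in> W" using a assms by (auto simp: grp_def)
    ultimately have "v + v' = 0" using assms(3) by auto
    then show "v = v' \<and> w = w'"
      by (metis F_add_self \<open>v + v' = w + w'\<close> add_left_imp_eq add.commute)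
  qed
  then have "card (V \<times> W) \<le> card (UNIV::F2_10 set)"
    using card_inj_on_le by (metis finite_F subset_UNIV)
  then show ?thesis by (simp add: card_cartesian_product card_F)
qed




lemma F_two[simp]: "2 * (x::F2_10) = 0" by (simp add: mult_2)

context
  fixes P :: "F2_10 set set"
  assumes part: "vs_partition P" and ev: "\<forall>V\<in>P. even (vec.dim V)"
begin

lemma finP: "finite P"
proof (rule finite_subset[of P "Pow UNIV"])
  show "finite (Pow (UNIV::F2_10 set))" by (simp only: finite_Pow_iff) (rule finite_F)
qed auto

lemma finPk: "finite {V\<in>P. Q V}" using finP by simp

lemma grpV: "V \<in> P \<Longrightarrow> grp V" using part_grp[OF part] .

lemma zeroV: "V \<in> P \<Longrightarrow> 0 \<in> V" using grpV by (auto simp: grp_def)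

lemma disjV: "V \<in> P \<Longrightarrow> W \<in> P \<Longrightarrow> V \<noteq> W \<Longrightarrow> V \<inter> W = {0}"
  using part_disj[OF part] .

lemma cardV: "V \<in> P \<Longrightarrow> card V = 2 ^ vec.dim V"
  using part card_subspace by (auto simp: vs_partition_def)

lemma dims: assumes "V \<in> P" shows "vec.dim V \<in> {2,4,6,8,10}"
proof -
  let ?d = "vec.dim V"
  have "2 ^ ?d \<le> (2::nat) ^ 10"
    using cardV[OF assms] card_mono[of UNIV V] card_F by simp
  then have le: "?d \<le> 10" using power_le_imp_le_exp[of "2::nat" ?d 10] by simp
  have "?d \<noteq> 0"
  proof
    assume "?d = 0"
    then have "card V = 1" using cardV[OF assms] by simp
    then obtain a where "V = {a}" by (auto simp: card_1_singleton_iff)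
    then have "V = {0}" using zeroV[OF assms] by auto
    then show False using part assms by (auto simp: vs_partition_def)
  qed
  moreover have "even ?d" using ev assms by auto
  then obtain k where k: "?d = 2 * k" by (rule evenE)
  ultimately have "k = 1 \<or> k = 2 \<or> k = 3 \<or> k = 4 \<or> k = 5" using le by arith
  then have "?d = 2 \<or> ?d = 4 \<or> ?d = 6 \<or> ?d = 8 \<or> ?d = 10" using k by auto
  then show ?thesis by auto
qed

lemma nonemptyk: "vs_type P k \<noteq> 0 \<Longrightarrow> \<exists>V\<in>P. vec.dim V = k"
proof -
  assume "vs_type P k \<noteq> 0"
  then have "{V\<in>P. vec.dim V = k} \<noteq> {}" unfolding vs_type_def by (metis card.empty)
  then show ?thesis by blast
qed

lemma vt: "vs_type P = (\<lambda>d. if d = 2 then vs_type P 2 else if d = 4 then vs_type P 4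
   else if d = 6 then vs_type P 6 else if d = 8 then vs_type P 8 else if d = 10 then vs_type P 10 else 0)"
proof
  fix d
  show "vs_type P d = (if d = 2 then vs_type P 2 else if d = 4 then vs_type P 4
   else if d = 6 then vs_type P 6 else if d = 8 then vs_type P 8 else if d = 10 then vs_type P 10 else 0)"
  proof (cases "d \<in> {2,4,6,8,10}")
    case True then show ?thesis by auto
  next
    case False
    then have "vs_type P d = 0" using nonemptyk dims by blast
    then show ?thesis using False by auto
  qed
qed

lemma eqn: "3 * vs_type P 2 + 15 * vs_type P 4 + 63 * vs_type P 6 + 255 * vs_type P 8
   + 1023 * vs_type P 10 = 1023"
proof -
  have "(\<Sum>V\<in>P. card (V - {0})) = card (\<Union>V\<in>P. V - {0})"
    by (rule card_UN_disjoint[symmetric]) (use finP disjV in auto)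
  also have "(\<Union>V\<in>P. V - {0}) = UNIV - {0}"
    using part unfolding vs_partition_def by blast
  also have "card (UNIV - {0::F2_10}) = 1023" by (simp add: card_F)
  finally have s0: "(\<Sum>V\<in>P. card (V - {0})) = 1023" .
  have "(\<Sum>V\<in>P. card V - 1) = (\<Sum>V\<in>P. card (V - {0}))"
    by (rule sum.cong) (auto simp: zeroV)
  with s0 have s1: "(\<Sum>V\<in>P. card V - 1) = 1023" by simp
  have "(\<Sum>V\<in>P. card V - 1) = (\<Sum>y\<in>{2,4,6,8,10}. \<Sum>V\<in>{V\<in>P. vec.dim V = y}. card V - 1)"
    by (rule sum.group[symmetric]) (use finP dims in auto)
  also have "\<dots> = (\<Sum>y\<in>{2,4,6,8,10}. vs_type P y * (2 ^ y - 1))"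
  proof (rule sum.cong[OF refl])
    fix y :: nat
    have "(\<Sum>V\<in>{V\<in>P. vec.dim V = y}. card V - 1) = (\<Sum>V\<in>{V\<in>P. vec.dim V = y}. 2 ^ y - 1)"
      by (rule sum.cong) (auto simp: cardV)
    then show "(\<Sum>V\<in>{V\<in>P. vec.dim V = y}. card V - 1) = vs_type P y * (2 ^ y - 1)"
      by (simp add: vs_type_def)
  qed
  also have "\<dots> = 3 * vs_type P 2 + 15 * vs_type P 4 + 63 * vs_type P 6 + 255 * vs_type P 8
   + 1023 * vs_type P 10" by simp
  finally show ?thesis using s1 by simp
qed


lemma cardk: "V \<in> P \<Longrightarrow> vec.dim V = k \<Longrightarrow> card V = 2 ^ k"
  using cardV by simp

lemma big: "vs_type P 6 + vs_type P 8 + vs_type P 10 \<le> 1"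
proof -
  let ?B6 = "{V\<in>P. vec.dim V = 6}" and ?B8 = "{V\<in>P. vec.dim V = 8}" and ?B10 = "{V\<in>P. vec.dim V = 10}"
  have "card (?B6 \<union> ?B8 \<union> ?B10) = card (?B6 \<union> ?B8) + card ?B10"
    by (rule card_Un_disjoint) (use finPk in auto)
  moreover have "card (?B6 \<union> ?B8) = card ?B6 + card ?B8"
    by (rule card_Un_disjoint) (use finPk in auto)
  ultimately have cB: "card (?B6 \<union> ?B8 \<union> ?B10) = vs_type P 6 + vs_type P 8 + vs_type P 10"
    by (simp add: vs_type_def)
  have ge: "64 \<le> card V" if "V \<in> ?B6 \<union> ?B8 \<union> ?B10" for V
    using that cardk by auto
  have fin: "finite (?B6 \<union> ?B8 \<union> ?B10)" using finP by auto
  have "card (?B6 \<union> ?B8 \<union> ?B10) \<le> Suc 0"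
    unfolding card_le_Suc0_iff_eq[OF fin]
  proof (intro ballI, rule ccontr)
    fix V W assume V: "V \<in> ?B6 \<union> ?B8 \<union> ?B10" and W: "W \<in> ?B6 \<union> ?B8 \<union> ?B10" and ne: "V \<noteq> W"
    have "V \<inter> W = {0}" using V W ne disjV by auto
    then have "card V * card W \<le> 1024" using prod_bound grpV V W by auto
    moreover have "64 * 64 \<le> card V * card W" using ge[OF V] ge[OF W] by (rule mult_le_mono)
    ultimately show False by simp
  qed
  then show ?thesis using cB by simp
qed

lemma eight: assumes "1 \<le> vs_type P 8" shows "vs_type P 4 = 0"
proof (rule ccontr)
  assume "vs_type P 4 \<noteq> 0"
  then obtain U where U: "U \<in> P" "vec.dim U = 4" using nonemptyk by blast
  have "vs_type P 8 \<noteq> 0" using assms by simp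
  then obtain W where W: "W \<in> P" "vec.dim W = 8" using nonemptyk by blast
  have "U \<noteq> W" using U W by auto
  then have "U \<inter> W = {0}" using U W disjV by auto
  then have "card U * card W \<le> 1024" using prod_bound grpV U W by auto
  then show False using cardk U W by simp
qed

lemma six: assumes "1 \<le> vs_type P 6" shows "vs_type P 4 \<le> 64"
proof -
  have "vs_type P 6 \<noteq> 0" using assms by simp
  then obtain W where W: "W \<in> P" "vec.dim W = 6" using nonemptyk by blast
  have cW: "card W = 64" using cardk W by simp
  have gW: "grp W" using grpV W by auto
  have "W \<noteq> UNIV" using cW card_F by auto
  then obtain e where e: "e \<notin> W" by auto
  let ?E = "(\<lambda>x. e + x) ` W"
  let ?S = "W \<union> ?E"
  have gS: "grp ?S"
    unfolding grp_def
  proof (intro conjI ballI)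
    show "0 \<in> ?S" using gW by (auto simp: grp_def)
  next
    fix x y assume x: "x \<in> ?S" and y: "y \<in> ?S"
    show "x + y \<in> ?S"
    proof -
      { fix a b assume "a \<in> W" "b \<in> W"
        then have ab: "a + b \<in> W" using gW by (auto simp: grp_def)
        have "(e + a) + b = e + (a + b)" by (simp add: add.assoc)
        moreover have "a + (e + b) = e + (a + b)" by (simp add: add.left_commute)
        moreover have "(e + a) + (e + b) = a + b"
          by (metis F_cancel add.assoc add.commute)
        ultimately have "(e + a) + b \<in> ?S" "a + (e + b) \<in> ?S" "(e + a) + (e + b) \<in> ?S"
          using ab by auto }
      then show ?thesis using x y gW by (auto simp: grp_def)
    qed
  qed
  have dE: "W \<inter> ?E = {}"
  proof (rule ccontr)
    assume "W \<inter> ?E \<noteq> {}"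
    then obtain a where a: "a \<in> W" "e + a \<in> W" by auto
    then have "(e + a) + a \<in> W" using gW unfolding grp_def by blast
    then show False using e by (simp add: add.assoc)
  qed
  have cE: "card ?E = 64" using cW by (subst card_image) (auto intro: inj_onI)
  have cS: "card ?S = 128" using cW cE dE by (subst card_Un_disjoint) auto
  define P4 where "P4 = {V\<in>P. vec.dim V = 4}"
  have ex: "\<exists>s. s \<in> U \<and> s \<in> ?E \<and> s \<noteq> 0" if U: "U \<in> P4" for U
  proof -
    have UP: "U \<in> P" "vec.dim U = 4" using U by (auto simp: P4_def)
    then have cU: "card U = 16" using cardk by simp
    have gU: "grp U" using grpV UP by auto
    have "U \<inter> ?S \<noteq> {0}"
    proof
      assume "U \<inter> ?S = {0}"
      then have "card U * card ?S \<le> 1024" using prod_bound gU gS by auto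
      then show False using cU cS by simp
    qed
    moreover have "0 \<in> U \<inter> ?S" using gU gS by (auto simp: grp_def)
    ultimately obtain s where s: "s \<in> U" "s \<in> ?S" "s \<noteq> 0" by blast
    have "U \<noteq> W" using UP W by auto
    then have "U \<inter> W = {0}" using UP W disjV by auto
    then have "s \<notin> W" using s by auto
    then show ?thesis using s by auto
  qed
  define \<sigma> where "\<sigma> U = (SOME s. s \<in> U \<and> s \<in> ?E \<and> s \<noteq> 0)" for U
  have \<sigma>: "\<sigma> U \<in> U \<and> \<sigma> U \<in> ?E \<and> \<sigma> U \<noteq> 0" if "U \<in> P4" for U
    unfolding \<sigma>_def using someI_ex[OF ex[OF that]] .
  have inj: "inj_on \<sigma> P4"
  proof (rule inj_onI)
    fix U U' assume U: "U \<in> P4" and U': "U' \<in> P4" and eq: "\<sigma> U = \<sigma> U'"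
    show "U = U'"
    proof (rule ccontr)
      assume "U \<noteq> U'"
      then have "U \<inter> U' = {0}" using U U' disjV by (auto simp: P4_def)
      then show False using \<sigma>[OF U] \<sigma>[OF U'] eq by auto
    qed
  qed
  have "card P4 = card (\<sigma> ` P4)" using inj by (simp add: card_image)
  also have "\<dots> \<le> card ?E" using \<sigma> by (intro card_mono) auto
  finally show ?thesis using cE by (simp add: P4_def vs_type_def)
qed


lemma dvd8_le: "8 dvd (f::nat) \<Longrightarrow> f \<le> 12 \<Longrightarrow> f \<le> 8"
  by (auto elim!: dvdE)
lemma dvd8_le2: "8 dvd (f::nat) \<Longrightarrow> f \<le> 2 \<Longrightarrow> f = 0"
  by (auto elim!: dvdE)

lemma small:
  assumes "vs_type P 6 = 0" "vs_type P 8 = 0" "vs_type P 10 = 0"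
  shows "vs_type P 4 \<le> 66"
proof (rule ccontr)
  assume "\<not> ?thesis"
  then have cs: "(vs_type P 2 = 6 \<and> vs_type P 4 = 67) \<or> (vs_type P 2 = 1 \<and> vs_type P 4 = 68)"
  proof -
    have e: "3 * vs_type P 2 + 15 * vs_type P 4 = 1023" using eqn assms by simp
    have "67 \<le> vs_type P 4" using \<open>\<not> vs_type P 4 \<le> 66\<close> by simp
    moreover have "vs_type P 4 \<le> 68" using e by linarith
    ultimately have "vs_type P 4 = 67 \<or> vs_type P 4 = 68" by linarith
    then show ?thesis using e by auto
  qed
  define P2 where "P2 = {V\<in>P. vec.dim V = 2}"
  define P4 where "P4 = {V\<in>P. vec.dim V = 4}"
  have e6: "{V\<in>P. vec.dim V = k} = {}" if "k \<in> {6,8,10}" for k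
    using assms that finPk[of "\<lambda>V. vec.dim V = k"] by (auto simp: vs_type_def)
  have Peq: "P = P2 \<union> P4"
  proof
    show "P \<subseteq> P2 \<union> P4"
    proof
      fix V assume V: "V \<in> P"
      have "vec.dim V \<in> {2,4,6,8,10}" using dims[OF V] .
      moreover have "vec.dim V \<notin> {6,8,10}" using e6 V by blast
      ultimately show "V \<in> P2 \<union> P4" using V by (auto simp: P2_def P4_def)
    qed
  qed (auto simp: P2_def P4_def)
  have fin2: "finite P2" "finite P4" using finP by (auto simp: P2_def P4_def)
  have d24: "P2 \<inter> P4 = {}" by (auto simp: P2_def P4_def)
  define h where "h u V = card {x\<in>V. dot u x = 1}" for u V
  have hV: "2 * h u V = card V \<or> h u V = 0" if "V \<in> P" for u V
    unfolding h_def using half grpV[OF that] .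
  have Nsum: "card {x. dot u x = 1} = (\<Sum>V\<in>P. h u V)" for u
  proof -
    have "{x. dot u x = 1} = (\<Union>V\<in>P. {x\<in>V. dot u x = 1})"
    proof
      show "{x. dot u x = 1} \<subseteq> (\<Union>V\<in>P. {x\<in>V. dot u x = 1})"
      proof
        fix x assume x: "x \<in> {x. dot u x = 1}"
        then have "x \<noteq> 0" by auto
        then obtain V where "V \<in> P" "x \<in> V" using part unfolding vs_partition_def by blast
        then show "x \<in> (\<Union>V\<in>P. {x\<in>V. dot u x = 1})" using x by auto
      qed
    qed auto
    then have "card {x. dot u x = 1} = card (\<Union>V\<in>P. {x\<in>V. dot u x = 1})" by simp
    also have "\<dots> = (\<Sum>V\<in>P. card {x\<in>V. dot u x = 1})"
    proof (rule card_UN_disjoint)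
      show "\<forall>i\<in>P. \<forall>j\<in>P. i \<noteq> j \<longrightarrow> {x \<in> i. dot u x = 1} \<inter> {x \<in> j. dot u x = 1} = {}"
      proof (intro ballI impI)
        fix V W assume "V \<in> P" "W \<in> P" "V \<noteq> W"
        then have "V \<inter> W = {0}" by (rule disjV)
        have "x = 0" if "x \<in> V" "x \<in> W" for x using that \<open>V \<inter> W = {0}\<close> by blast
        then show "{x \<in> V. dot u x = 1} \<inter> {x \<in> W. dot u x = 1} = {}"
          using dot_zero[of u] by fastforce
      qed
    qed (use finP in auto)
    finally show ?thesis unfolding h_def .
  qed
  have N8: "8 dvd card {x. dot u x = 1}" for u
  proof -
    have "2 * card {x\<in>UNIV. dot u x = 1} = card (UNIV::F2_10 set) \<or> card {x\<in>UNIV. dot u x = 1} = 0"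
      by (rule half[OF grp_UNIV])
    then have "card {x. dot u x = 1} = 512 \<or> card {x. dot u x = 1} = 0" using card_F by auto
    then show ?thesis by auto
  qed
  have d4: "8 dvd (\<Sum>V\<in>P4. h u V)" for u
  proof (rule dvd_sum)
    fix V assume V: "V \<in> P4"
    then have "card V = 16" "V \<in> P" using cardk by (auto simp: P4_def)
    then show "8 dvd h u V" using hV[of V u] by auto
  qed
  define f where "f u = (\<Sum>V\<in>P2. h u V)" for u
  have f8: "8 dvd f u" for u
  proof -
    have "8 dvd f u + (\<Sum>V\<in>P4. h u V)"
      using N8[of u] Nsum[of u] unfolding f_def Peq by (simp add: sum.union_disjoint fin2 d24)
    then show ?thesis using d4[of u] by (simp add: dvd_add_left_iff)
  qed
  have fle: "f u \<le> vs_type P 2 * 2" for u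
  proof -
    have "f u \<le> of_nat (card P2) * 2" unfolding f_def
    proof (rule sum_bounded_above)
      fix V assume V: "V \<in> P2"
      then have "card V = 4" "V \<in> P" using cardk by (auto simp: P2_def)
      then show "h u V \<le> 2" using hV[of V u] by auto
    qed
    then show ?thesis by (simp add: P2_def vs_type_def)
  qed
  have tot: "(\<Sum>u\<in>UNIV. f u) = vs_type P 2 * 1536"
  proof -
    have "(\<Sum>u\<in>UNIV. f u) = (\<Sum>V\<in>P2. \<Sum>u\<in>UNIV. h u V)"
      unfolding f_def by (rule sum.swap)
    also have "\<dots> = (\<Sum>V\<in>P2. 1536)"
    proof (rule sum.cong[OF refl])
      fix V assume V: "V \<in> P2"
      then have "card V = 4" "V \<in> P" using cardk by (auto simp: P2_def)
      then show "(\<Sum>u\<in>UNIV. h u V) = 1536"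
        unfolding h_def using sum_h[OF zeroV] by simp
    qed
    finally show ?thesis by (simp add: P2_def vs_type_def)
  qed
  from cs show False
  proof
    assume c: "vs_type P 2 = 6 \<and> vs_type P 4 = 67"
    have "f u \<le> 8" for u using dvd8_le[OF f8] fle[of u] c by simp
    then have "(\<Sum>u\<in>UNIV. f u) \<le> of_nat (card (UNIV::F2_10 set)) * 8"
      by (intro sum_bounded_above) auto
    then show False using tot c card_F by simp
  next
    assume c: "vs_type P 2 = 1 \<and> vs_type P 4 = 68"
    have "f u = 0" for u using dvd8_le2[OF f8] fle[of u] c by simp
    then show False using tot c by simp
  qed
qed

end

lemma arith_final:
  fixes n2 n4 n6 n8 n10 :: nat and F :: "nat \<Rightarrow> nat"
  assumes e: "3*n2 + 15*n4 + 63*n6 + 255*n8 + 1023*n10 = 1023"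
    and b: "n6 + n8 + n10 \<le> 1" and h8: "1 \<le> n8 \<Longrightarrow> n4 = 0" and h6: "1 \<le> n6 \<Longrightarrow> n4 \<le> 64"
    and h0: "n6 = 0 \<Longrightarrow> n8 = 0 \<Longrightarrow> n10 = 0 \<Longrightarrow> n4 \<le> 66"
    and F_def: "F = (\<lambda>k::nat. if k = 2 then n2 else if k = 4 then n4 else if k = 6 then n6 else if k = 8 then n8 else if k = 10 then n10 else 0)"
  shows "F = (\<lambda>d::nat. if d = 10 then 1 else 0)
     \<or> F = (\<lambda>d::nat. if d = 2 then 256 else if d = 8 then 1 else 0)
     \<or> (\<exists>i::nat. i \<le> 64 \<and>
          F = (\<lambda>d::nat. if d = 2 then 320 - 5 * i else if d = 4 then i
                           else if d = 6 then 1 else 0))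
     \<or> (\<exists>i::nat. i \<le> 66 \<and>
          F = (\<lambda>d::nat. if d = 2 then 341 - 5 * i else if d = 4 then i else 0))"
proof -
  consider "n10 = 1" | "n8 = 1" | "n6 = 1" | "n6 = 0 \<and> n8 = 0 \<and> n10 = 0" using b by linarith
  then show ?thesis
  proof cases
    case 1
    have "n2 = 0" using e 1 by linarith
    moreover have "n4 = 0" using e 1 by linarith
    moreover have "n6 = 0" using e 1 by linarith
    moreover have "n8 = 0" using e 1 by linarith
    ultimately have "F = (\<lambda>d::nat. if d = 10 then 1 else 0)" using 1 unfolding F_def by (simp add: fun_eq_iff)
    then show ?thesis by blast
  next
    case 2
    have "n4 = 0" using h8 2 by simp
    moreover have "n6 = 0" "n10 = 0" using b 2 by linarith+
    moreover have "n2 = 256" using e 2 \<open>n4 = 0\<close> \<open>n6 = 0\<close> \<open>n10 = 0\<close> by linarith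
    ultimately have "F = (\<lambda>d::nat. if d = 2 then 256 else if d = 8 then 1 else 0)"
      using 2 unfolding F_def by (simp add: fun_eq_iff)
    then show ?thesis by blast
  next
    case 3
    have "n8 = 0" "n10 = 0" using b 3 by linarith+
    have "n4 \<le> 64" using h6 3 by simp
    have "n2 = 320 - 5 * n4" using e 3 \<open>n8 = 0\<close> \<open>n10 = 0\<close> by linarith
    then have "F = (\<lambda>d::nat. if d = 2 then 320 - 5 * n4 else if d = 4 then n4 else if d = 6 then 1 else 0)"
      using 3 \<open>n8 = 0\<close> \<open>n10 = 0\<close> unfolding F_def by (simp add: fun_eq_iff)
    then show ?thesis using \<open>n4 \<le> 64\<close> by blast
  next
    case 4
    then have "n4 \<le> 66" using h0 by simp
    have "n2 = 341 - 5 * n4" using e 4 by linarith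
    then have "F = (\<lambda>d::nat. if d = 2 then 341 - 5 * n4 else if d = 4 then n4 else 0)"
      using 4 unfolding F_def by (simp add: fun_eq_iff)
    then show ?thesis using \<open>n4 \<le> 66\<close> by blast
  qed
qed

theorem classify:
  "\<forall>P. vs_partition P \<and> (\<forall>V\<in>P. even (vec.dim V)) \<longrightarrow>
       vs_type P = (\<lambda>d. if d = 10 then 1 else 0)
     \<or> vs_type P = (\<lambda>d. if d = 2 then 256 else if d = 8 then 1 else 0)
     \<or> (\<exists>i::nat. i \<le> 64 \<and>
          vs_type P = (\<lambda>d. if d = 2 then 320 - 5 * i else if d = 4 then i
                           else if d = 6 then 1 else 0))
     \<or> (\<exists>i::nat. i \<le> 66 \<and>
          vs_type P = (\<lambda>d. if d = 2 then 341 - 5 * i else if d = 4 then i else 0))"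
proof (intro allI impI, elim conjE)
  fix P assume p: "vs_partition P" and ev: "\<forall>V\<in>P. even (vec.dim V)"
  have h8: "1 \<le> vs_type P 8 \<Longrightarrow> vs_type P 4 = 0" by (rule eight[OF p ev])
  have h6: "1 \<le> vs_type P 6 \<Longrightarrow> vs_type P 4 \<le> 64" by (rule six[OF p ev])
  have h0: "vs_type P 6 = 0 \<Longrightarrow> vs_type P 8 = 0 \<Longrightarrow> vs_type P 10 = 0 \<Longrightarrow> vs_type P 4 \<le> 66"
    by (rule small[OF p ev])
  note af = arith_final[OF eqn[OF p ev] big[OF p ev] h8 h6 h0 vt[OF p ev]]
  show "vs_type P = (\<lambda>d. if d = 10 then 1 else 0)
     \<or> vs_type P = (\<lambda>d. if d = 2 then 256 else if d = 8 then 1 else 0)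
     \<or> (\<exists>i::nat. i \<le> 64 \<and>
          vs_type P = (\<lambda>d. if d = 2 then 320 - 5 * i else if d = 4 then i
                           else if d = 6 then 1 else 0))
     \<or> (\<exists>i::nat. i \<le> 66 \<and>
          vs_type P = (\<lambda>d. if d = 2 then 341 - 5 * i else if d = 4 then i else 0))"
    by (rule af)
qed




definition E :: "nat \<Rightarrow> bit poly set" where
  "E n = {p. \<forall>i\<ge>n. coeff p i = 0}"

fun allpolys :: "nat \<Rightarrow> bit poly list" where
  "allpolys 0 = [0]"
| "allpolys (Suc n) = concat (map (\<lambda>p. [pCons 0 p, pCons 1 p]) (allpolys n))"

lemma allpolys_complete: "q \<in> E n \<Longrightarrow> q \<in> set (allpolys n)"
proof (induction n arbitrary: q)
  case 0
  then have "q = 0" by (auto simp: E_def poly_eq_iff)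
  then show ?case by simp
next
  case (Suc n)
  obtain a p where q: "q = pCons a p" by (cases q) auto
  have "p \<in> E n" using Suc.prems unfolding E_def q by (auto simp: coeff_pCons split: nat.splits)
  then have "p \<in> set (allpolys n)" by (rule Suc.IH)
  moreover have "a = 0 \<or> a = 1" by (rule bit_cases)
  ultimately show ?case unfolding q by auto
qed

lemma prime_test:
  fixes m :: "bit poly"
  assumes d: "degree m \<ge> 1"
    and nd: "\<And>q. degree q \<ge> 1 \<Longrightarrow> 2 * degree q \<le> degree m \<Longrightarrow> \<not> q dvd m"
  shows "prime_elem m"
proof (rule field_poly_irreducible_imp_prime, rule irreducibleI)
  show m0: "m \<noteq> 0" using d by auto
  show "\<not> m dvd 1" using d m0 is_unit_iff_degree[OF m0] by auto
  fix a b assume ab: "m = a * b"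
  show "a dvd 1 \<or> b dvd 1"
  proof (rule ccontr)
    assume "\<not> (a dvd 1 \<or> b dvd 1)"
    then have na: "\<not> a dvd 1" "\<not> b dvd 1" by auto
    have a0: "a \<noteq> 0" "b \<noteq> 0" using m0 ab by auto
    have da: "degree a \<ge> 1" "degree b \<ge> 1"
      using na is_unit_iff_degree[OF a0(1)] is_unit_iff_degree[OF a0(2)] by auto
    have dm: "degree m = degree a + degree b" using ab a0 degree_mult_eq by auto
    show False
    proof (cases "2 * degree a \<le> degree m")
      case True then show False using nd[of a] da ab by auto
    next
      case False
      then have "2 * degree b \<le> degree m" using dm by simp
      then show False using nd[of b] da ab by auto
    qed
  qed
qed

lemma prime_test2:
  fixes m :: "bit poly"
  assumes d: "degree m \<ge> 1" "degree m < 2 * n"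
    and chk: "\<forall>q\<in>set (allpolys n). 1 \<le> degree q \<longrightarrow> 2 * degree q \<le> degree m \<longrightarrow> m mod q \<noteq> 0"
  shows "prime_elem m"
proof (rule prime_test[OF d(1)])
  fix q :: "bit poly" assume q: "degree q \<ge> 1" "2 * degree q \<le> degree m"
  then have "q \<in> E n" using d(2) by (auto simp: E_def intro!: coeff_eq_0)
  then have "q \<in> set (allpolys n)" by (rule allpolys_complete)
  then show "\<not> q dvd m" using chk q by (auto simp: dvd_eq_mod_eq_0)
qed

definition "m2 = [:1,1,1::bit:]"
definition "m4 = [:1,1,0,0,1::bit:]"
definition "m6 = [:1,1,0,0,0,0,1::bit:]"
definition "m8 = [:1,1,0,1,1,0,0,0,1::bit:]"

lemma deg_m: "degree m2 = 2" "degree m4 = 4" "degree m6 = 6" "degree m8 = 8"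
  by (simp_all add: m2_def m4_def m6_def m8_def)

lemma prime_m2: "prime_elem m2"
  by (rule prime_test2[of _ 2]) (simp add: deg_m, simp add: deg_m, code_simp)
lemma prime_m4: "prime_elem m4"
  by (rule prime_test2[of _ 3]) (simp add: deg_m, simp add: deg_m, code_simp)
lemma prime_m6: "prime_elem m6"
  by (rule prime_test2[of _ 4]) (simp add: deg_m, simp add: deg_m, code_simp)
lemma prime_m8: "prime_elem m8"
  by (rule prime_test2[of _ 5]) (simp add: deg_m, simp add: deg_m, code_simp)




definition part :: "'a::ab_group_add set \<Rightarrow> 'a set set \<Rightarrow> bool" where
  "part S P \<longleftrightarrow> (\<forall>V\<in>P. grp V \<and> V \<noteq> {0} \<and> V \<subseteq> S) \<and> (\<forall>x\<in>S. x \<noteq> 0 \<longrightarrow> (\<exists>!V. V \<in> P \<and> x \<in> V))"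

definition cnt :: "'a set set \<Rightarrow> nat \<Rightarrow> nat" where
  "cnt P t = card {V\<in>P. card V = t}"

lemma cnt_const:
  assumes "\<forall>V\<in>A. card V = s"
  shows "cnt A t = (if t = s then card A else 0)"
proof -
  have "{V\<in>A. card V = t} = (if t = s then A else {})" using assms by auto
  then show ?thesis unfolding cnt_def by simp
qed

lemma cnt_Un:
  assumes "A \<inter> B = {}" "finite A" "finite B"
  shows "cnt (A \<union> B) t = cnt A t + cnt B t"
proof -
  have "{V\<in>A \<union> B. card V = t} = {V\<in>A. card V = t} \<union> {V\<in>B. card V = t}" by auto
  then show ?thesis unfolding cnt_def using assms by (simp add: card_Un_disjoint disjoint_iff)
qed

lemma bit_poly_neg: "- (p::bit poly) = p"
  by (simp add: poly_eq_iff)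
lemma bit_poly_diff: "(p::bit poly) - q = p + q"
  by (metis bit_poly_neg diff_conv_add_uminus)

lemma E_0[simp]: "0 \<in> E n" by (simp add: E_def)
lemma E_add: "p \<in> E n \<Longrightarrow> q \<in> E n \<Longrightarrow> p + q \<in> E n" by (simp add: E_def)
lemma grp_E: "grp (E n)" by (simp add: grp_def E_add)
lemma E_mono: "k \<le> n \<Longrightarrow> p \<in> E k \<Longrightarrow> p \<in> E n" by (simp add: E_def)
lemma E_deg: "p \<in> E n \<longleftrightarrow> (p = 0 \<or> degree p < n)"
proof
  assume p: "p \<in> E n"
  show "p = 0 \<or> degree p < n"
  proof (rule ccontr)
    assume "\<not> (p = 0 \<or> degree p < n)"
    then have "p \<noteq> 0" "n \<le> degree p" by auto
    then show False using p by (auto simp: E_def)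
  qed
next
  assume "p = 0 \<or> degree p < n"
  then show "p \<in> E n" by (cases "p = 0") (auto simp: E_def intro!: coeff_eq_0)
qed

lemma E_Suc: "E (Suc n) = (\<lambda>p. pCons 0 p) ` E n \<union> (\<lambda>p. pCons 1 p) ` E n"
proof
  show "E (Suc n) \<subseteq> (\<lambda>p. pCons 0 p) ` E n \<union> (\<lambda>p. pCons 1 p) ` E n"
  proof
    fix q assume q: "q \<in> E (Suc n)"
    obtain a p where qq: "q = pCons a p" by (cases q) auto
    have "p \<in> E n" using q unfolding E_def qq by (auto simp: coeff_pCons split: nat.splits)
    moreover have "a = 0 \<or> a = 1" by (rule bit_cases)
    ultimately show "q \<in> (\<lambda>p. pCons 0 p) ` E n \<union> (\<lambda>p. pCons 1 p) ` E n" unfolding qq by auto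
  qed
next
  show "(\<lambda>p. pCons 0 p) ` E n \<union> (\<lambda>p. pCons 1 p) ` E n \<subseteq> E (Suc n)"
    by (auto simp: E_def coeff_pCons split: nat.splits)
qed

lemma E_zero: "E 0 = {0}" by (auto simp: E_def poly_eq_iff)

lemma finite_E[simp]: "finite (E n)"
  by (induction n) (auto simp: E_Suc E_zero)

lemma card_E: "card (E n) = 2 ^ n"
proof (induction n)
  case 0
  have "E 0 = {0}" by (auto simp: E_def poly_eq_iff)
  then show ?case by simp
next
  case (Suc n)
  have "card (E (Suc n)) = card ((\<lambda>p. pCons 0 p) ` E n) + card ((\<lambda>p. pCons 1 p) ` E n)"
    unfolding E_Suc by (rule card_Un_disjoint) auto
  also have "\<dots> = card (E n) + card (E n)"
    by (subst card_image, simp add: inj_on_def)+ simp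
  finally show ?case using Suc by simp
qed

lemma mod_E: "degree m = n \<Longrightarrow> m \<noteq> 0 \<Longrightarrow> (a::bit poly) mod m \<in> E n"
  using degree_mod_less[of m a] by (auto simp: E_deg)

lemma monom_E: "(r::bit poly) \<in> E n \<Longrightarrow> monom 1 k * r \<in> E (k + n)"
  by (auto simp: E_def coeff_monom_mult)

lemma dec: "(p::bit poly) = poly_cutoff k p + monom 1 k * poly_shift k p"
proof (rule poly_eqI)
  fix i
  show "coeff p i = coeff (poly_cutoff k p + monom 1 k * poly_shift k p) i"
    by (cases "i < k") (simp_all add: coeff_poly_cutoff coeff_monom_mult coeff_poly_shift)
qed

lemma cut_E: "poly_cutoff k (p::bit poly) \<in> E k"
  by (simp add: E_def coeff_poly_cutoff)

lemma shift_E: "(p::bit poly) \<in> E (k + n) \<Longrightarrow> poly_shift k p \<in> E n"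
  by (simp add: E_def coeff_poly_shift add.commute)

lemma cut_dec: "a \<in> E k \<Longrightarrow> poly_cutoff k (a + monom 1 k * b) = a"
proof (rule poly_eqI)
  fix i assume a: "a \<in> E k"
  show "coeff (poly_cutoff k (a + monom 1 k * b)) i = coeff a i"
    using a by (cases "i < k") (simp_all add: coeff_poly_cutoff coeff_monom_mult E_def)
qed

lemma shift_dec: "a \<in> E k \<Longrightarrow> poly_shift k (a + monom 1 k * b) = b"
proof (rule poly_eqI)
  fix i assume a: "a \<in> E k"
  have "coeff (monom (1::bit) k * b) (i + k) = coeff b i"
    by (simp add: coeff_monom_mult)
  moreover have "coeff a (i + k) = 0" using a by (simp add: E_def)
  ultimately show "coeff (poly_shift k (a + monom 1 k * b)) i = coeff b i"
    by (simp only: coeff_poly_shift coeff_add) simp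
qed


subsection \<open>Lifting construction\<close>

definition gmap :: "nat \<Rightarrow> bit poly \<Rightarrow> bit poly \<Rightarrow> bit poly \<Rightarrow> bit poly" where
  "gmap k m c a = a + monom 1 k * ((c * a) mod m)"
definition Gset :: "nat \<Rightarrow> bit poly \<Rightarrow> bit poly \<Rightarrow> bit poly set" where
  "Gset k m c = gmap k m c ` E k"
definition Bset :: "nat \<Rightarrow> nat \<Rightarrow> bit poly set" where
  "Bset k n = (\<lambda>b. monom 1 k * b) ` E n"
definition LP :: "nat \<Rightarrow> nat \<Rightarrow> bit poly \<Rightarrow> bit poly set set" where
  "LP k n m = Gset k m ` E n \<union> {Bset k n}"

lemma gmap_add: "gmap k m c (a + b) = gmap k m c a + gmap k m c b"
  by (simp add: gmap_def distrib_left poly_mod_add_left algebra_simps)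

lemma gmap_0[simp]: "gmap k m c 0 = 0"
  by (simp add: gmap_def)

context
  fixes k n :: nat and m :: "bit poly"
  assumes k1: "1 \<le> k" and kn: "k \<le> n" and pm: "prime_elem m" and dm: "degree m = n"
begin

lemma m0: "m \<noteq> 0" using pm by auto

lemma H: "a \<in> E k \<Longrightarrow> c \<in> E n \<Longrightarrow> a \<noteq> 0 \<Longrightarrow> c \<noteq> 0 \<Longrightarrow> \<not> m dvd c * a"
proof
  assume a: "a \<in> E k" and c: "c \<in> E n" and a0: "a \<noteq> 0" and c0: "c \<noteq> 0" and d: "m dvd c * a"
  have "m dvd c \<or> m dvd a" using d pm by (simp add: prime_elem_dvd_mult_iff)
  then show False
  proof
    assume "m dvd c"
    then have "degree m \<le> degree c" using c0 by (rule dvd_imp_degree_le)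
    then show False using c c0 dm by (auto simp: E_deg)
  next
    assume "m dvd a"
    then have "degree m \<le> degree a" using a0 by (rule dvd_imp_degree_le)
    then show False using a a0 dm kn by (auto simp: E_deg)
  qed
qed

lemma mu_inj: "a \<in> E k \<Longrightarrow> a \<noteq> 0 \<Longrightarrow> c \<in> E n \<Longrightarrow> c' \<in> E n \<Longrightarrow> (c * a) mod m = (c' * a) mod m \<Longrightarrow> c = c'"
proof -
  assume a: "a \<in> E k" "a \<noteq> 0" and c: "c \<in> E n" "c' \<in> E n" and eq: "(c * a) mod m = (c' * a) mod m"
  have "((c + c') * a) mod m = (c * a) mod m + (c' * a) mod m"
    by (simp add: distrib_right poly_mod_add_left)
  also have "\<dots> = 0" using eq by (simp add: bit_poly_diff[symmetric])
  finally have "m dvd (c + c') * a" by (simp add: dvd_eq_mod_eq_0)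
  moreover have "c + c' \<in> E n" using c by (rule E_add)
  ultimately have "c + c' = 0" using H a by blast
  then show "c = c'" by (metis add_left_imp_eq bit_poly_diff diff_self add.right_neutral)
qed

lemma mu_surj: "a \<in> E k \<Longrightarrow> a \<noteq> 0 \<Longrightarrow> b \<in> E n \<Longrightarrow> \<exists>c\<in>E n. (c * a) mod m = b"
proof -
  assume a: "a \<in> E k" "a \<noteq> 0" and b: "b \<in> E n"
  let ?mu = "\<lambda>c. (c * a) mod m"
  have inj: "inj_on ?mu (E n)" using mu_inj a by (auto intro: inj_onI)
  have sub: "?mu ` E n \<subseteq> E n" using mod_E dm m0 by auto
  have "card (?mu ` E n) = card (E n)" using inj by (rule card_image)
  then have "?mu ` E n = E n" by (rule card_subset_eq[OF finite_E sub])
  then have "b \<in> ?mu ` E n" using b by simp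
  then show ?thesis by blast
qed

lemma gmap_E: "a \<in> E k \<Longrightarrow> gmap k m c a \<in> E (k + n)"
  unfolding gmap_def
  by (rule E_add) (auto intro: E_mono[of k "k+n"] monom_E[OF mod_E[OF dm m0]])

lemma cut_gmap: "a \<in> E k \<Longrightarrow> poly_cutoff k (gmap k m c a) = a"
  unfolding gmap_def by (rule cut_dec)

lemma shift_gmap: "a \<in> E k \<Longrightarrow> poly_shift k (gmap k m c a) = (c * a) mod m"
  unfolding gmap_def by (rule shift_dec)

lemma gmap_inj: "inj_on (gmap k m c) (E k)"
  by (rule inj_onI) (metis cut_gmap)

lemma grp_G: "grp (Gset k m c)"
  unfolding grp_def Gset_def
proof (intro conjI ballI)
  show "0 \<in> gmap k m c ` E k" by (metis E_0 gmap_0 image_eqI)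
next
  fix x y assume "x \<in> gmap k m c ` E k" "y \<in> gmap k m c ` E k"
  then obtain a b where "a \<in> E k" "b \<in> E k" "x = gmap k m c a" "y = gmap k m c b" by auto
  then show "x + y \<in> gmap k m c ` E k" by (metis E_add gmap_add image_eqI)
qed

lemma card_G: "card (Gset k m c) = 2 ^ k"
  unfolding Gset_def using gmap_inj card_image card_E by metis

lemma one_E: "1 \<in> E k" using k1 by (simp add: E_def coeff_1)

lemma G_ne: "Gset k m c \<noteq> {0}"
proof
  assume "Gset k m c = {0}"
  then have "gmap k m c 1 = 0" unfolding Gset_def using one_E by auto
  then have "poly_cutoff k (gmap k m c 1) = 0" by simp
  then show False using cut_gmap[OF one_E] by simp
qed

lemma G_sub: "Gset k m c \<subseteq> E (k + n)"
  unfolding Gset_def using gmap_E by auto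

lemma mon_inj: "inj_on (\<lambda>b. monom (1::bit) k * b) X"
  by (rule inj_onI) (simp add: monom_eq_0_iff)

lemma grp_B: "grp (Bset k n)"
  unfolding grp_def Bset_def
proof (intro conjI ballI)
  show "0 \<in> (\<lambda>b. monom 1 k * b) ` E n" by (metis E_0 mult_zero_right image_eqI)
next
  fix x y assume "x \<in> (\<lambda>b. monom 1 k * b) ` E n" "y \<in> (\<lambda>b. monom 1 k * b) ` E n"
  then obtain a b where "a \<in> E n" "b \<in> E n" "x = monom 1 k * a" "y = monom 1 k * b" by auto
  then show "x + y \<in> (\<lambda>b. monom 1 k * b) ` E n" by (metis E_add distrib_left image_eqI)
qed

lemma card_B: "card (Bset k n) = 2 ^ n"
  unfolding Bset_def using mon_inj card_image card_E by metis

lemma B_sub: "Bset k n \<subseteq> E (k + n)"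
  unfolding Bset_def using monom_E by auto

lemma B_ne: "Bset k n \<noteq> {0}"
proof
  assume "Bset k n = {0}"
  then have "monom 1 k * (1::bit poly) = 0" unfolding Bset_def using one_E E_mono kn by blast
  then show False by (simp add: monom_eq_0_iff)
qed

lemma cut_B: "p \<in> Bset k n \<Longrightarrow> poly_cutoff k p = 0"
  unfolding Bset_def using cut_dec[of 0 k] by auto

lemma G_unique: "p \<in> Gset k m c \<Longrightarrow> p \<in> Gset k m c' \<Longrightarrow> c \<in> E n \<Longrightarrow> c' \<in> E n \<Longrightarrow> p \<noteq> 0 \<Longrightarrow> c = c'"
proof -
  assume p: "p \<in> Gset k m c" "p \<in> Gset k m c'" and c: "c \<in> E n" "c' \<in> E n" and p0: "p \<noteq> 0"
  obtain a where a: "a \<in> E k" "p = gmap k m c a" using p(1) unfolding Gset_def by auto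
  obtain a' where a': "a' \<in> E k" "p = gmap k m c' a'" using p(2) unfolding Gset_def by auto
  have "a = a'" using cut_gmap[OF a(1), of c] cut_gmap[OF a'(1), of c'] a a' by simp
  moreover have "a \<noteq> 0" using a p0 by (auto simp: gmap_def)
  moreover have "(c * a) mod m = (c' * a') mod m"
    using shift_gmap[OF a(1), of c] shift_gmap[OF a'(1), of c'] a a' by simp
  ultimately show "c = c'" using mu_inj a(1) c by blast
qed

lemma GB_disj: "p \<in> Gset k m c \<Longrightarrow> p \<in> Bset k n \<Longrightarrow> p = 0"
proof -
  assume p: "p \<in> Gset k m c" "p \<in> Bset k n"
  obtain a where a: "a \<in> E k" "p = gmap k m c a" using p(1) unfolding Gset_def by auto
  have "a = 0" using cut_gmap[OF a(1), of c] cut_B[OF p(2)] a by simp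
  then show "p = 0" using a by simp
qed

lemma G_inj: "inj_on (Gset k m) (E n)"
proof (rule inj_onI)
  fix c c' assume c: "c \<in> E n" "c' \<in> E n" and eq: "Gset k m c = Gset k m c'"
  have "gmap k m c 1 \<in> Gset k m c" unfolding Gset_def using one_E by auto
  moreover have "gmap k m c 1 \<noteq> 0" using cut_gmap[OF one_E, of c] by (metis poly_cutoff_0 one_neq_zero)
  ultimately show "c = c'" using G_unique eq c by metis
qed

lemma B_notin: "Bset k n \<notin> Gset k m ` E n"
proof
  assume "Bset k n \<in> Gset k m ` E n"
  then obtain c where c: "c \<in> E n" "Bset k n = Gset k m c" by auto
  have "gmap k m c 1 \<in> Gset k m c" unfolding Gset_def using one_E by auto
  moreover have "gmap k m c 1 \<noteq> 0" using cut_gmap[OF one_E, of c] by (metis poly_cutoff_0 one_neq_zero)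
  ultimately show False using GB_disj c by metis
qed

lemma LP_part: "part (E (k + n)) (LP k n m)"
  unfolding part_def
proof (rule conjI; intro ballI impI)
  fix V assume "V \<in> LP k n m"
  then show "grp V \<and> V \<noteq> {0} \<and> V \<subseteq> E (k + n)"
    unfolding LP_def using grp_G G_ne G_sub grp_B B_ne B_sub by auto
next
  fix p assume p: "p \<in> E (k + n)" "p \<noteq> 0"
  define a where "a = poly_cutoff k p"
  define b where "b = poly_shift k p"
  have a: "a \<in> E k" unfolding a_def by (rule cut_E)
  have b: "b \<in> E n" unfolding b_def using p(1) by (rule shift_E)
  have pd: "p = a + monom 1 k * b" unfolding a_def b_def by (rule dec)
  have ex: "\<exists>V. V \<in> LP k n m \<and> p \<in> V"
  proof (cases "a = 0")
    case True
    then have "p \<in> Bset k n" unfolding Bset_def using pd b by auto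
    then show ?thesis unfolding LP_def by auto
  next
    case False
    then obtain c where c: "c \<in> E n" "(c * a) mod m = b" using mu_surj a b by blast
    then have "p = gmap k m c a" using pd by (simp add: gmap_def)
    then have "p \<in> Gset k m c" unfolding Gset_def using a by auto
    then show ?thesis unfolding LP_def using c by auto
  qed
  show "\<exists>!V. V \<in> LP k n m \<and> p \<in> V"
  proof (rule ex_ex1I[OF ex])
    fix V W assume V: "V \<in> LP k n m \<and> p \<in> V" and W: "W \<in> LP k n m \<and> p \<in> W"
    have pV: "p \<in> V" and pW: "p \<in> W" using V W by auto
    have Vc: "V \<in> Gset k m ` E n \<or> V = Bset k n" and Wc: "W \<in> Gset k m ` E n \<or> W = Bset k n"
      using V W unfolding LP_def by auto
    show "V = W"
    proof (cases "V = Bset k n")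
      case True
      show ?thesis
      proof (cases "W = Bset k n")
        case False
        then obtain c' where "W = Gset k m c'" using Wc by auto
        then show ?thesis using GB_disj pW pV True p(2) by blast
      qed (use True in simp)
    next
      case False
      then obtain c where c: "c \<in> E n" "V = Gset k m c" using Vc by auto
      show ?thesis
      proof (cases "W = Bset k n")
        case True
        then show ?thesis using GB_disj pW pV c p(2) by blast
      next
        case False
        then obtain c' where c': "c' \<in> E n" "W = Gset k m c'" using Wc by auto
        have "c = c'" using G_unique pV pW c c' p(2) by blast
        then show ?thesis using c c' by simp
      qed
    qed
  qed
qed

lemma LP_cnt: "cnt (LP k n m) t = (if t = 2 ^ k then 2 ^ n else 0) + (if t = 2 ^ n then 1 else 0)"
proof -
  have c1: "cnt (LP k n m) t = cnt (Gset k m ` E n) t + cnt {Bset k n} t"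
    unfolding LP_def by (rule cnt_Un) (use B_notin in auto)
  have "\<forall>V\<in>Gset k m ` E n. card V = 2 ^ k" using card_G by blast
  then have c2: "cnt (Gset k m ` E n) t = (if t = 2 ^ k then card (Gset k m ` E n) else 0)"
    by (rule cnt_const)
  have c3: "card (Gset k m ` E n) = 2 ^ n"
    using card_image[OF G_inj] card_E by simp
  have "\<forall>V\<in>{Bset k n}. card V = 2 ^ n" using card_B by blast
  then have c4: "cnt {Bset k n} t = (if t = 2 ^ n then card {Bset k n} else 0)"
    by (rule cnt_const)
  show ?thesis unfolding c1 c2 c3 c4 by simp
qed

lemma finite_LP: "finite (LP k n m)"
  unfolding LP_def by simp

end


subsection \<open>Transport and refinement\<close>

lemma grp_nz: "grp W \<Longrightarrow> W \<noteq> {0} \<Longrightarrow> \<exists>w\<in>W. w \<noteq> 0"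
  unfolding grp_def by blast

lemma part_mem: "part S P \<Longrightarrow> V \<in> P \<Longrightarrow> grp V \<and> V \<noteq> {0} \<and> V \<subseteq> S"
  unfolding part_def by blast

lemma part_uniq:
  assumes "part S P" "V \<in> P" "W \<in> P" "x \<in> V" "x \<in> W" "x \<noteq> 0"
  shows "V = W"
proof -
  have c1: "\<forall>V\<in>P. grp V \<and> V \<noteq> {0} \<and> V \<subseteq> S" and c2: "\<forall>x\<in>S. x \<noteq> 0 \<longrightarrow> (\<exists>!V. V \<in> P \<and> x \<in> V)"
    using assms(1) unfolding part_def by auto
  have "V \<subseteq> S" using c1 assms(2) by auto
  then have "x \<in> S" using assms(4) by auto
  then have "\<exists>!V. V \<in> P \<and> x \<in> V" using c2 assms(6) by auto
  then obtain U where "\<And>Y. Y \<in> P \<and> x \<in> Y \<Longrightarrow> Y = U" by (metis ex1E)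
  then show ?thesis using assms(2-5) by metis
qed

lemma part_ex: "part S P \<Longrightarrow> x \<in> S \<Longrightarrow> x \<noteq> 0 \<Longrightarrow> \<exists>V\<in>P. x \<in> V"
  unfolding part_def by (metis ex1E)

lemma partI:
  assumes "\<And>V. V \<in> P \<Longrightarrow> grp V \<and> V \<noteq> {0} \<and> V \<subseteq> S"
    and "\<And>x. x \<in> S \<Longrightarrow> x \<noteq> 0 \<Longrightarrow> \<exists>V\<in>P. x \<in> V"
    and "\<And>V W x. V \<in> P \<Longrightarrow> W \<in> P \<Longrightarrow> x \<in> V \<Longrightarrow> x \<in> W \<Longrightarrow> x \<noteq> 0 \<Longrightarrow> V = W"
  shows "part S P"
  unfolding part_def
proof (rule conjI; intro ballI impI)
  fix V assume "V \<in> P" then show "grp V \<and> V \<noteq> {0} \<and> V \<subseteq> S" by (rule assms(1))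
next
  fix x assume x: "x \<in> S" "x \<noteq> 0"
  obtain V where V: "V \<in> P" "x \<in> V" using assms(2)[OF x] by blast
  show "\<exists>!V. V \<in> P \<and> x \<in> V"
  proof (rule ex1I[of _ V])
    show "V \<in> P \<and> x \<in> V" using V by simp
  next
    fix W assume "W \<in> P \<and> x \<in> W"
    then show "W = V" using assms(3)[of W V x] V x by blast
  qed
qed

lemma add_zero_hom:
  fixes \<phi> :: "'a::ab_group_add \<Rightarrow> 'b::ab_group_add"
  assumes "\<And>x y. \<phi> (x + y) = \<phi> x + \<phi> y"
  shows "\<phi> 0 = 0"
  using assms[of 0 0] by simp

lemma part_image:
  fixes \<phi> :: "'a::ab_group_add \<Rightarrow> 'b::ab_group_add"
  assumes add: "\<And>x y. \<phi> (x + y) = \<phi> x + \<phi> y" and inj: "inj_on \<phi> S" and p: "part S P"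
  shows "part (\<phi> ` S) ((`) \<phi> ` P)"
proof (rule partI)
  have z: "\<phi> 0 = 0" using add by (rule add_zero_hom)
  fix W assume "W \<in> (`) \<phi> ` P"
  then obtain V where V: "V \<in> P" "W = \<phi> ` V" by auto
  have m: "grp V" "V \<noteq> {0}" "V \<subseteq> S" using part_mem[OF p V(1)] by auto
  have "grp W" unfolding V(2) grp_def
  proof (intro conjI ballI)
    show "0 \<in> \<phi> ` V" using m(1) z by (metis grp_def image_eqI)
  next
    fix x y assume "x \<in> \<phi> ` V" "y \<in> \<phi> ` V"
    then obtain a b where "a \<in> V" "b \<in> V" "x = \<phi> a" "y = \<phi> b" by auto
    then show "x + y \<in> \<phi> ` V" using m(1) add by (metis grp_def image_eqI)
  qed
  moreover have "W \<noteq> {0}"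
  proof
    assume W0: "W = {0}"
    obtain v where v: "v \<in> V" "v \<noteq> 0" using grp_nz m by blast
    have "0 \<in> V" using m(1) by (simp add: grp_def)
    have "\<phi> v = \<phi> 0" using W0 V(2) v z by auto
    then have "v = 0" using inj m(3) v(1) \<open>0 \<in> V\<close> by (auto dest: inj_onD)
    then show False using v by simp
  qed
  moreover have "W \<subseteq> \<phi> ` S" using V m by auto
  ultimately show "grp W \<and> W \<noteq> {0} \<and> W \<subseteq> \<phi> ` S" by simp
next
  have z: "\<phi> 0 = 0" using add by (rule add_zero_hom)
  fix y assume y: "y \<in> \<phi> ` S" "y \<noteq> 0"
  then obtain x where x: "x \<in> S" "y = \<phi> x" by auto
  then have "x \<noteq> 0" using y z by auto
  then obtain V where "V \<in> P" "x \<in> V" using part_ex[OF p x(1)] by auto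
  then show "\<exists>W\<in>(`) \<phi> ` P. y \<in> W" using x by auto
next
  fix V W y assume V: "V \<in> (`) \<phi> ` P" and W: "W \<in> (`) \<phi> ` P" and yV: "y \<in> V" and yW: "y \<in> W" and y0: "y \<noteq> 0"
  obtain V' where V': "V' \<in> P" "V = \<phi> ` V'" using V by auto
  obtain W' where W': "W' \<in> P" "W = \<phi> ` W'" using W by auto
  obtain a where a: "a \<in> V'" "y = \<phi> a" using yV V' by auto
  obtain b where b: "b \<in> W'" "y = \<phi> b" using yW W' by auto
  have "a \<in> S" "b \<in> S" using a b V' W' part_mem[OF p] by auto
  then have "a = b" using a b inj by (auto dest: inj_onD)
  moreover have "a \<noteq> 0" using a y0 add_zero_hom[OF add] by auto
  ultimately have "V' = W'" using part_uniq[OF p V'(1) W'(1)] a b by auto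
  then show "V = W" using V' W' by simp
qed

lemma cnt_image:
  fixes \<phi> :: "'a::ab_group_add \<Rightarrow> 'b::ab_group_add"
  assumes inj: "inj_on \<phi> S" and p: "part S P"
  shows "cnt ((`) \<phi> ` P) t = cnt P t"
proof -
  have sub: "V \<subseteq> S" if "V \<in> P" for V using part_mem[OF p that] by auto
  have injP: "inj_on ((`) \<phi>) P"
  proof (rule inj_onI)
    fix V W assume "V \<in> P" "W \<in> P" "\<phi> ` V = \<phi> ` W"
    then show "V = W" using inj_on_image_eq_iff[OF inj] sub by metis
  qed
  have cV: "card (\<phi> ` V) = card V" if "V \<in> P" for V
    using card_image[OF inj_on_subset[OF inj sub[OF that]]] .
  have "{W\<in>(`) \<phi> ` P. card W = t} = (`) \<phi> ` {V\<in>P. card V = t}"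
    using cV by auto
  moreover have "card ((`) \<phi> ` {V\<in>P. card V = t}) = card {V\<in>P. card V = t}"
    by (rule card_image) (rule inj_on_subset[OF injP], auto)
  ultimately show ?thesis unfolding cnt_def by simp
qed


context
  fixes S :: "'a::ab_group_add set" and P :: "'a set set" and I :: "'i set"
    and Vf :: "'i \<Rightarrow> 'a set" and Q :: "'i \<Rightarrow> 'a set set"
  assumes p: "part S P" and sub: "Vf ` I \<subseteq> P" and injV: "inj_on Vf I"
    and q: "\<And>i. i \<in> I \<Longrightarrow> part (Vf i) (Q i)"
begin

lemma Q_sub: "i \<in> I \<Longrightarrow> W \<in> Q i \<Longrightarrow> W \<subseteq> Vf i"
  using part_mem[OF q] by blast

lemma Q_nz: "i \<in> I \<Longrightarrow> W \<in> Q i \<Longrightarrow> \<exists>w\<in>W. w \<noteq> 0"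
  using part_mem[OF q] grp_nz by blast

lemma disj1: "i \<in> I \<Longrightarrow> W \<in> Q i \<Longrightarrow> W \<notin> P - Vf ` I"
proof
  assume i: "i \<in> I" and W: "W \<in> Q i" and WP: "W \<in> P - Vf ` I"
  obtain w where w: "w \<in> W" "w \<noteq> 0" using Q_nz[OF i W] by blast
  have "w \<in> Vf i" using Q_sub[OF i W] w by auto
  have "Vf i \<in> P" using sub i by auto
  have "W = Vf i" using part_uniq[OF p _ \<open>Vf i \<in> P\<close> w(1) \<open>w \<in> Vf i\<close> w(2)] WP by auto
  then show False using WP i by auto
qed

lemma disj2: "i \<in> I \<Longrightarrow> j \<in> I \<Longrightarrow> W \<in> Q i \<Longrightarrow> W \<in> Q j \<Longrightarrow> i = j"
proof -
  assume i: "i \<in> I" and j: "j \<in> I" and Wi: "W \<in> Q i" and Wj: "W \<in> Q j"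
  obtain w where w: "w \<in> W" "w \<noteq> 0" using Q_nz[OF i Wi] by blast
  have "w \<in> Vf i" "w \<in> Vf j" using Q_sub[OF i Wi] Q_sub[OF j Wj] w by auto
  moreover have "Vf i \<in> P" "Vf j \<in> P" using sub i j by auto
  ultimately have "Vf i = Vf j" using part_uniq[OF p] w(2) by blast
  then show "i = j" using injV i j by (auto dest: inj_onD)
qed

lemma part_refine: "part S ((P - Vf ` I) \<union> (\<Union>i\<in>I. Q i))"
proof (rule partI)
  fix W assume "W \<in> (P - Vf ` I) \<union> (\<Union>i\<in>I. Q i)"
  then show "grp W \<and> W \<noteq> {0} \<and> W \<subseteq> S"
  proof
    assume "W \<in> P - Vf ` I"
    then show ?thesis using part_mem[OF p] by blast
  next
    assume "W \<in> (\<Union>i\<in>I. Q i)"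
    then obtain i where i: "i \<in> I" "W \<in> Q i" by auto
    have "Vf i \<subseteq> S" using part_mem[OF p] sub i(1) by blast
    then show ?thesis using part_mem[OF q[OF i(1)] i(2)] by blast
  qed
next
  fix x assume x: "x \<in> S" "x \<noteq> 0"
  obtain V where V: "V \<in> P" "x \<in> V" using part_ex[OF p x] by blast
  show "\<exists>W\<in>(P - Vf ` I) \<union> (\<Union>i\<in>I. Q i). x \<in> W"
  proof (cases "V \<in> Vf ` I")
    case True
    then obtain i where i: "i \<in> I" "V = Vf i" by auto
    obtain W where "W \<in> Q i" "x \<in> W" using part_ex[OF q[OF i(1)]] V i x by blast
    then show ?thesis using i by blast
  next
    case False
    then show ?thesis using V by blast
  qed
next
  fix V W x assume V: "V \<in> (P - Vf ` I) \<union> (\<Union>i\<in>I. Q i)" and W: "W \<in> (P - Vf ` I) \<union> (\<Union>i\<in>I. Q i)"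
    and xV: "x \<in> V" and xW: "x \<in> W" and x0: "x \<noteq> 0"
  show "V = W"
  proof (cases "V \<in> P - Vf ` I")
    case Vc: True
    show ?thesis
    proof (cases "W \<in> P - Vf ` I")
      case True
      then show ?thesis using Vc part_uniq[OF p] xV xW x0 by blast
    next
      case False
      then obtain j where j: "j \<in> I" "W \<in> Q j" using W by auto
      have "x \<in> Vf j" using Q_sub[OF j] xW by auto
      then have "Vf j = V" using part_uniq[OF p] sub j Vc xV x0 by blast
      then show ?thesis using Vc j by auto
    qed
  next
    case Vc: False
    then obtain i where i: "i \<in> I" "V \<in> Q i" using V by auto
    have xi: "x \<in> Vf i" using Q_sub[OF i] xV by auto
    show ?thesis
    proof (cases "W \<in> P - Vf ` I")
      case True
      then have "Vf i = W" using part_uniq[OF p] sub i xi xW x0 by blast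
      then show ?thesis using True i by auto
    next
      case False
      then obtain j where j: "j \<in> I" "W \<in> Q j" using W by auto
      have "x \<in> Vf j" using Q_sub[OF j] xW by auto
      then have "Vf i = Vf j" using part_uniq[OF p] sub i j xi x0 by blast
      then have "i = j" using injV i j by (auto dest: inj_onD)
      then show ?thesis using part_uniq[OF q[OF i(1)]] i j xV xW x0 by blast
    qed
  qed
qed

lemma cnt_refine:
  assumes fP: "finite P" and fI: "finite I" and fQ: "\<And>i. i \<in> I \<Longrightarrow> finite (Q i)"
  shows "cnt ((P - Vf ` I) \<union> (\<Union>i\<in>I. Q i)) t = cnt (P - Vf ` I) t + (\<Sum>i\<in>I. cnt (Q i) t)"
proof -
  have d: "(P - Vf ` I) \<inter> (\<Union>i\<in>I. Q i) = {}" using disj1 by blast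
  have "cnt ((P - Vf ` I) \<union> (\<Union>i\<in>I. Q i)) t = cnt (P - Vf ` I) t + cnt (\<Union>i\<in>I. Q i) t"
    by (rule cnt_Un[OF d]) (use fP fI fQ in auto)
  moreover have "cnt (\<Union>i\<in>I. Q i) t = (\<Sum>i\<in>I. cnt (Q i) t)"
  proof -
    have "{W \<in> (\<Union>i\<in>I. Q i). card W = t} = (\<Union>i\<in>I. {W\<in>Q i. card W = t})" by auto
    then have "cnt (\<Union>i\<in>I. Q i) t = card (\<Union>i\<in>I. {W\<in>Q i. card W = t})" unfolding cnt_def by simp
    also have "\<dots> = (\<Sum>i\<in>I. card {W\<in>Q i. card W = t})"
    proof (rule card_UN_disjoint[OF fI])
      show "\<forall>i\<in>I. finite {W \<in> Q i. card W = t}" using fQ by auto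
      show "\<forall>i\<in>I. \<forall>j\<in>I. i \<noteq> j \<longrightarrow> {W \<in> Q i. card W = t} \<inter> {W \<in> Q j. card W = t} = {}"
        using disj2 by blast
    qed
    finally show ?thesis unfolding cnt_def .
  qed
  ultimately show ?thesis by simp
qed

end




lemma cnt_diff:
  assumes "X \<subseteq> P" "finite P"
  shows "cnt (P - X) t = cnt P t - cnt X t"
proof -
  have "{V\<in>P - X. card V = t} = {V\<in>P. card V = t} - {V\<in>X. card V = t}" by auto
  moreover have "{V\<in>X. card V = t} \<subseteq> {V\<in>P. card V = t}" using assms by auto
  ultimately show ?thesis unfolding cnt_def using assms by (simp add: card_Diff_subset finite_subset)
qed

definition sh :: "nat \<Rightarrow> bit poly \<Rightarrow> bit poly" where "sh j p = monom 1 j * p"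

lemma sh_add: "sh j (x + y) = sh j x + sh j y" by (simp add: sh_def distrib_left)
lemma sh_inj: "inj_on (sh j) X" unfolding sh_def by (rule inj_onI) (simp add: monom_eq_0_iff)
lemma Bset_sh: "Bset k n = sh k ` E n" by (simp add: Bset_def sh_def)

lemma gmap_add': "\<And>x y. gmap k m c (x + y) = gmap k m c x + gmap k m c y" by (rule gmap_add)

lemma m_facts: "m2 \<noteq> 0" "m4 \<noteq> 0" "m6 \<noteq> 0" "m8 \<noteq> 0"
  using deg_m by auto

definition "LS4 = LP 2 2 m2"
lemma LS4_part: "part (E 4) LS4"
  using LP_part[of 2 2 m2] prime_m2 deg_m by (simp add: LS4_def)
lemma LS4_cnt: "cnt LS4 t = (if t = 4 then 5 else 0)"
  using LP_cnt[of 2 2 m2 t] prime_m2 deg_m by (simp add: LS4_def)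
lemma LS4_fin: "finite LS4"
  using finite_LP[of 2 2 m2] prime_m2 deg_m by (simp add: LS4_def)

definition "P6 = LP 2 4 m4"
lemma P6_part: "part (E 6) P6"
  using LP_part[of 2 4 m4] prime_m4 deg_m by (simp add: P6_def)
lemma P6_cnt: "cnt P6 t = (if t = 4 then 16 else 0) + (if t = 16 then 1 else 0)"
  using LP_cnt[of 2 4 m4 t] prime_m4 deg_m by (simp add: P6_def)
lemma P6_fin: "finite P6"
  using finite_LP[of 2 4 m4] prime_m4 deg_m by (simp add: P6_def)
lemma B6_in: "Bset 2 4 \<in> P6" by (simp add: P6_def LP_def)

definition "LS6 = (P6 - id ` {Bset 2 4}) \<union> (\<Union>i\<in>{Bset 2 4}. (`) (sh 2) ` LS4)"

lemma LS4_img_part: "part (sh j ` E 4) ((`) (sh j) ` LS4)"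
  by (rule part_image[OF sh_add sh_inj LS4_part])
lemma LS4_img_cnt: "cnt ((`) (sh j) ` LS4) t = (if t = 4 then 5 else 0)"
  using cnt_image[OF sh_inj LS4_part] LS4_cnt by simp

lemma LS6_part: "part (E 6) LS6"
  unfolding LS6_def
  by (rule part_refine[OF P6_part]) (use B6_in LS4_img_part[of 2] Bset_sh in auto)

lemma LS6_cnt: "cnt LS6 t = (if t = 4 then 21 else 0)"
proof -
  have "cnt LS6 t = cnt (P6 - id ` {Bset 2 4}) t + (\<Sum>i\<in>{Bset 2 4}. cnt ((`) (sh 2) ` LS4) t)"
    unfolding LS6_def
    by (rule cnt_refine[OF P6_part]) (use B6_in LS4_img_part[of 2] Bset_sh P6_fin LS4_fin in auto)
  also have "cnt (P6 - id ` {Bset 2 4}) t = cnt P6 t - cnt {Bset 2 4} t"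
    using cnt_diff[of "{Bset 2 4}" P6 t] B6_in P6_fin by simp
  also have "cnt {Bset 2 4} t = (if t = 16 then 1 else 0)"
    using cnt_const[of "{Bset 2 4}" 16 t] card_B[of 2 4 m4] prime_m4 deg_m by simp
  finally show ?thesis using P6_cnt[of t] LS4_img_cnt[of 2 t] by auto
qed

lemma LS6_fin: "finite LS6"
  unfolding LS6_def using P6_fin LS4_fin by auto


definition "PA = LP 4 6 m6"
lemma PA_hyp: "1 \<le> (4::nat)" "4 \<le> (6::nat)" "prime_elem m6" "degree m6 = 6"
  using prime_m6 deg_m by auto
lemma PA_part: "part (E 10) PA"
  using LP_part[OF PA_hyp] by (simp add: PA_def)
lemma PA_cnt: "cnt PA t = (if t = 16 then 64 else 0) + (if t = 64 then 1 else 0)"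
  using LP_cnt[OF PA_hyp, of t] by (simp add: PA_def)
lemma PA_fin: "finite PA"
  using finite_LP[OF PA_hyp] by (simp add: PA_def)
lemma BA_in: "Bset 4 6 \<in> PA" by (simp add: PA_def LP_def)
lemma GA_in: "c \<in> E 6 \<Longrightarrow> Gset 4 m6 c \<in> PA" by (simp add: PA_def LP_def)

definition "QA c = (`) (gmap 4 m6 c) ` LS4"
lemma QA_part: "part (Gset 4 m6 c) (QA c)"
  unfolding QA_def Gset_def by (rule part_image[OF gmap_add' gmap_inj[OF PA_hyp] LS4_part])
lemma QA_cnt: "cnt (QA c) t = (if t = 4 then 5 else 0)"
  unfolding QA_def using cnt_image[OF gmap_inj[OF PA_hyp] LS4_part] LS4_cnt by simp
lemma QA_fin: "finite (QA c)" unfolding QA_def using LS4_fin by simp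

definition "PT1 C = (PA - Gset 4 m6 ` C) \<union> (\<Union>c\<in>C. QA c)"

context
  fixes C assumes C: "C \<subseteq> E 6"
begin

lemma fC: "finite C" using C finite_E[of 6] by (rule finite_subset)

lemma GC_inj: "inj_on (Gset 4 m6) C"
  using inj_on_subset[OF G_inj[OF PA_hyp] C] .

lemma PT1_part: "part (E 10) (PT1 C)"
  unfolding PT1_def
  by (rule part_refine[OF PA_part _ GC_inj QA_part]) (use C GA_in in auto)

lemma PT1_cnt: "cnt (PT1 C) t = (if t = 16 then 64 - card C else 0) + (if t = 64 then 1 else 0)
    + (if t = 4 then 5 * card C else 0)"
proof -
  have fC: "finite C" using C finite_E[of 6] by (rule finite_subset)
  have "cnt (PT1 C) t = cnt (PA - Gset 4 m6 ` C) t + (\<Sum>c\<in>C. cnt (QA c) t)"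
    unfolding PT1_def
    by (rule cnt_refine[OF PA_part _ GC_inj QA_part]) (use C GA_in PA_fin fC QA_fin in auto)
  also have "cnt (PA - Gset 4 m6 ` C) t = cnt PA t - cnt (Gset 4 m6 ` C) t"
    by (rule cnt_diff) (use C GA_in PA_fin in auto)
  also have "cnt (Gset 4 m6 ` C) t = (if t = 16 then card (Gset 4 m6 ` C) else 0)"
    by (rule cnt_const) (use card_G[OF PA_hyp] in auto)
  also have "card (Gset 4 m6 ` C) = card C" using card_image[OF GC_inj] .
  also have "(\<Sum>c\<in>C. cnt (QA c) t) = card C * (if t = 4 then 5 else 0)"
    using QA_cnt by simp
  finally show ?thesis using PA_cnt[of t] by auto
qed

lemma BA_in_PT1: "Bset 4 6 \<in> PT1 C"
  unfolding PT1_def using BA_in B_notin[OF PA_hyp] C by auto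

lemma PT1_fin: "finite (PT1 C)"
  unfolding PT1_def using PA_fin QA_fin fC by auto

definition "PT2 = (PT1 C - id ` {Bset 4 6}) \<union> (\<Union>i\<in>{Bset 4 6}. (`) (sh 4) ` LS6)"

lemma LS6_img_part: "part (Bset 4 6) ((`) (sh 4) ` LS6)"
  unfolding Bset_sh by (rule part_image[OF sh_add sh_inj LS6_part])

lemma PT2_part: "part (E 10) PT2"
  unfolding PT2_def
  by (rule part_refine[OF PT1_part]) (use BA_in_PT1 LS6_img_part in auto)

lemma PT2_cnt: "cnt PT2 t = (if t = 16 then 64 - card C else 0)
    + (if t = 4 then 5 * card C + 21 else 0)"
proof -
  have "cnt PT2 t = cnt (PT1 C - id ` {Bset 4 6}) t + (\<Sum>i\<in>{Bset 4 6}. cnt ((`) (sh 4) ` LS6) t)"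
    unfolding PT2_def
    by (rule cnt_refine[OF PT1_part]) (use BA_in_PT1 LS6_img_part PT1_fin LS6_fin in auto)
  also have "cnt (PT1 C - id ` {Bset 4 6}) t = cnt (PT1 C) t - cnt {Bset 4 6} t"
    using cnt_diff[of "{Bset 4 6}" "PT1 C" t] BA_in_PT1 PT1_fin by simp
  also have "cnt {Bset 4 6} t = (if t = 64 then 1 else 0)"
    using cnt_const[of "{Bset 4 6}" 64 t] card_B[OF PA_hyp] by simp
  also have "cnt ((`) (sh 4) ` LS6) t = cnt LS6 t"
    by (rule cnt_image[OF sh_inj LS6_part])
  finally show ?thesis using PT1_cnt[of t] LS6_cnt[of t] by auto
qed

end

definition "PT3 = (PA - id ` {Bset 4 6}) \<union> (\<Union>i\<in>{Bset 4 6}. (`) (sh 4) ` P6)"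

lemma P6_img_part: "part (Bset 4 6) ((`) (sh 4) ` P6)"
  unfolding Bset_sh by (rule part_image[OF sh_add sh_inj P6_part])

lemma PT3_part: "part (E 10) PT3"
  unfolding PT3_def
  by (rule part_refine[OF PA_part]) (use BA_in P6_img_part in auto)

lemma PT3_cnt: "cnt PT3 t = (if t = 16 then 65 else 0) + (if t = 4 then 16 else 0)"
proof -
  have "cnt PT3 t = cnt (PA - id ` {Bset 4 6}) t + (\<Sum>i\<in>{Bset 4 6}. cnt ((`) (sh 4) ` P6) t)"
    unfolding PT3_def
    by (rule cnt_refine[OF PA_part]) (use BA_in P6_img_part PA_fin P6_fin in auto)
  also have "cnt (PA - id ` {Bset 4 6}) t = cnt PA t - cnt {Bset 4 6} t"
    using cnt_diff[of "{Bset 4 6}" PA t] BA_in PA_fin by simp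
  also have "cnt {Bset 4 6} t = (if t = 64 then 1 else 0)"
    using cnt_const[of "{Bset 4 6}" 64 t] card_B[OF PA_hyp] by simp
  also have "cnt ((`) (sh 4) ` P6) t = cnt P6 t"
    by (rule cnt_image[OF sh_inj P6_part])
  finally show ?thesis using PA_cnt[of t] P6_cnt[of t] by auto
qed

definition "PB = LP 2 8 m8"
lemma PB_hyp: "1 \<le> (2::nat)" "2 \<le> (8::nat)" "prime_elem m8" "degree m8 = 8"
  using prime_m8 deg_m by auto
lemma PB_part: "part (E 10) PB"
  using LP_part[OF PB_hyp] by (simp add: PB_def)
lemma PB_cnt: "cnt PB t = (if t = 4 then 256 else 0) + (if t = 256 then 1 else 0)"
  using LP_cnt[OF PB_hyp, of t] by (simp add: PB_def)

lemma PE_part: "part (E 10) {E 10}"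
proof (rule partI)
  fix V assume "V \<in> {E 10}"
  moreover have "E 10 \<noteq> {0}"
  proof
    assume "E 10 = {0}"
    moreover have "(1::bit poly) \<in> E 10" by (simp add: E_def coeff_1)
    ultimately show False by auto
  qed
  ultimately show "grp V \<and> V \<noteq> {0} \<and> V \<subseteq> E 10" using grp_E by auto
qed auto

lemma PE_cnt: "cnt {E 10} t = (if t = 1024 then 1 else 0)"
  using cnt_const[of "{E 10}" 1024 t] card_E[of 10] by simp




lemma phi_exists:
  "\<exists>\<phi> :: bit poly \<Rightarrow> F2_10. (\<forall>x y. \<phi> (x + y) = \<phi> x + \<phi> y) \<and> inj_on \<phi> (E 10) \<and> \<phi> ` E 10 = UNIV"
proof -
  have "\<exists>h. bij_betw h {0..<card (UNIV::10 set)} (UNIV::10 set)"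
    by (rule ex_bij_betw_nat_finite) simp
  then obtain h where h: "bij_betw h {0..<(10::nat)} (UNIV::10 set)" by auto
  define hinv where "hinv = the_inv_into {0..<(10::nat)} h"
  have hh: "hinv (h i) = i" if "i < 10" for i
    unfolding hinv_def using that bij_betw_imp_inj_on[OF h] by (simp add: the_inv_into_f_f)
  define \<phi> where "\<phi> p = (\<chi> j. coeff p (hinv j))" for p :: "bit poly"
  have add: "\<forall>x y. \<phi> (x + y) = \<phi> x + \<phi> y"
    by (simp add: \<phi>_def vec_eq_iff)
  have inj: "inj_on \<phi> (E 10)"
  proof (rule inj_onI)
    fix p q assume p: "p \<in> E 10" and q: "q \<in> E 10" and eq: "\<phi> p = \<phi> q"
    show "p = q"
    proof (rule poly_eqI)
      fix i
      show "coeff p i = coeff q i"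
      proof (cases "i < 10")
        case True
        have "\<phi> p $ h i = \<phi> q $ h i" using eq by simp
        then show ?thesis using hh[OF True] by (simp add: \<phi>_def)
      next
        case False
        then show ?thesis using p q by (simp add: E_def)
      qed
    qed
  qed
  have "card (\<phi> ` E 10) = 1024" using card_image[OF inj] card_E[of 10] by simp
  then have "\<phi> ` E 10 = UNIV"
    using card_F by (metis card_subset_eq finite_F subset_UNIV)
  then show ?thesis using add inj by blast
qed

lemma to_F:
  assumes p: "part (E 10) P"
  shows "\<exists>Pf. vs_partition Pf \<and> (\<forall>d. vs_type Pf d = cnt P (2 ^ d))"
proof -
  obtain \<phi> :: "bit poly \<Rightarrow> F2_10" where add: "\<forall>x y. \<phi> (x + y) = \<phi> x + \<phi> y"
    and inj: "inj_on \<phi> (E 10)" and surj: "\<phi> ` E 10 = UNIV"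
    using phi_exists by blast
  let ?Pf = "(`) \<phi> ` P"
  have pf: "part UNIV ?Pf" using part_image[OF _ inj p] add surj by metis
  have vp: "vs_partition ?Pf"
    unfolding vs_partition_def
  proof (rule conjI)
    show "\<forall>V\<in>?Pf. vec.subspace V \<and> V \<noteq> {0}"
    proof
      fix V assume "V \<in> ?Pf"
      then have "grp V \<and> V \<noteq> {0}" using part_mem[OF pf] by blast
      then show "vec.subspace V \<and> V \<noteq> {0}" by (simp add: subspace_iff_grp)
    qed
    have "\<forall>x\<in>UNIV. x \<noteq> 0 \<longrightarrow> (\<exists>!V. V \<in> ?Pf \<and> x \<in> V)"
      using pf unfolding part_def by (rule conjunct2)
    then show "\<forall>x::F2_10. x \<noteq> 0 \<longrightarrow> (\<exists>!V. V \<in> ?Pf \<and> x \<in> V)" by simp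
  qed
  have "vs_type ?Pf d = cnt P (2 ^ d)" for d
  proof -
    have "{V\<in>?Pf. vec.dim V = d} = {V\<in>?Pf. card V = 2 ^ d}"
    proof (rule Collect_cong)
      fix V show "(V \<in> ?Pf \<and> vec.dim V = d) = (V \<in> ?Pf \<and> card V = 2 ^ d)"
      proof (cases "V \<in> ?Pf")
        case True
        then have "grp V" using part_mem[OF pf] by blast
        then have "vec.subspace V" by (simp add: subspace_iff_grp)
        then have "card V = 2 ^ vec.dim V" by (rule card_subspace)
        then show ?thesis using True by simp
      qed simp
    qed
    then have "vs_type ?Pf d = cnt ?Pf (2 ^ d)" unfolding vs_type_def cnt_def by simp
    also have "\<dots> = cnt P (2 ^ d)" by (rule cnt_image[OF inj p])
    finally show ?thesis .
  qed
  then show ?thesis using vp by blast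
qed

lemma pow2: "(2::nat) ^ d = 4 \<longleftrightarrow> d = 2" "(2::nat) ^ d = 16 \<longleftrightarrow> d = 4"
  "(2::nat) ^ d = 64 \<longleftrightarrow> d = 6" "(2::nat) ^ d = 256 \<longleftrightarrow> d = 8" "(2::nat) ^ d = 1024 \<longleftrightarrow> d = 10"
  using power_inject_exp[of 2 d 2] power_inject_exp[of 2 d 4] power_inject_exp[of 2 d 6]
    power_inject_exp[of 2 d 8] power_inject_exp[of 2 d 10] by simp_all

lemma ex10: "\<exists>P. vs_partition P \<and> vs_type P = (\<lambda>d. if d = 10 then 1 else 0)"
proof -
  obtain Pf where vp: "vs_partition Pf" and vt: "\<forall>d. vs_type Pf d = cnt {E 10} (2 ^ d)"
    using to_F[OF PE_part] by blast
  have "vs_type Pf = (\<lambda>d. if d = 10 then 1 else 0)"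
  proof
    fix d show "vs_type Pf d = (\<lambda>d. if d = 10 then 1 else 0) d"
      by (cases "d = 2 \<or> d = 4 \<or> d = 6 \<or> d = 8 \<or> d = 10") (auto simp: vt PE_cnt pow2)
  qed
  then show ?thesis using vp by blast
qed

lemma ex8: "\<exists>P. vs_partition P \<and> vs_type P = (\<lambda>d. if d = 2 then 256 else if d = 8 then 1 else 0)"
proof -
  obtain Pf where vp: "vs_partition Pf" and vt: "\<forall>d. vs_type Pf d = cnt PB (2 ^ d)"
    using to_F[OF PB_part] by blast
  have "vs_type Pf = (\<lambda>d. if d = 2 then 256 else if d = 8 then 1 else 0)"
  proof
    fix d show "vs_type Pf d = (\<lambda>d. if d = 2 then 256 else if d = 8 then 1 else 0) d"
      by (cases "d = 2 \<or> d = 4 \<or> d = 6 \<or> d = 8 \<or> d = 10") (auto simp: vt PB_cnt pow2)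
  qed
  then show ?thesis using vp by blast
qed

lemma ex6:
  assumes i: "i \<le> 64"
  shows "\<exists>P. vs_partition P \<and> vs_type P = (\<lambda>d. if d = 2 then 320 - 5 * i else if d = 4 then i
                           else if d = 6 then 1 else 0)"
proof -
  obtain C where C: "C \<subseteq> E 6" "card C = 64 - i"
    using obtain_subset_with_card_n[of "64 - i" "E 6"] card_E[of 6] by auto
  obtain Pf where vp: "vs_partition Pf" and vt: "\<forall>d. vs_type Pf d = cnt (PT1 C) (2 ^ d)"
    using to_F[OF PT1_part[OF C(1)]] by blast
  have "vs_type Pf = (\<lambda>d. if d = 2 then 320 - 5 * i else if d = 4 then i
                           else if d = 6 then 1 else 0)"
  proof
    fix d show "vs_type Pf d = (\<lambda>d. if d = 2 then 320 - 5 * i else if d = 4 then i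
                           else if d = 6 then 1 else 0) d"
      using i by (cases "d = 2 \<or> d = 4 \<or> d = 6 \<or> d = 8 \<or> d = 10") (auto simp: vt PT1_cnt[OF C(1)] C(2) pow2)
  qed
  then show ?thesis using vp by blast
qed

lemma ex4:
  assumes i: "i \<le> 65"
  shows "\<exists>P. vs_partition P \<and> vs_type P = (\<lambda>d. if d = 2 then 341 - 5 * i else if d = 4 then i else 0)"
proof (cases "i = 65")
  case True
  obtain Pf where vp: "vs_partition Pf" and vt: "\<forall>d. vs_type Pf d = cnt PT3 (2 ^ d)"
    using to_F[OF PT3_part] by blast
  have "vs_type Pf = (\<lambda>d. if d = 2 then 341 - 5 * i else if d = 4 then i else 0)"
  proof
    fix d show "vs_type Pf d = (\<lambda>d. if d = 2 then 341 - 5 * i else if d = 4 then i else 0) d"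
      using True by (cases "d = 2 \<or> d = 4 \<or> d = 6 \<or> d = 8 \<or> d = 10") (auto simp: vt PT3_cnt pow2)
  qed
  then show ?thesis using vp by blast
next
  case False
  then have i': "i \<le> 64" using i by simp
  obtain C where C: "C \<subseteq> E 6" "card C = 64 - i"
    using obtain_subset_with_card_n[of "64 - i" "E 6"] card_E[of 6] by auto
  obtain Pf where vp: "vs_partition Pf" and vt: "\<forall>d. vs_type Pf d = cnt (PT2 C) (2 ^ d)"
    using to_F[OF PT2_part[OF C(1)]] by blast
  have "vs_type Pf = (\<lambda>d. if d = 2 then 341 - 5 * i else if d = 4 then i else 0)"
  proof
    fix d show "vs_type Pf d = (\<lambda>d. if d = 2 then 341 - 5 * i else if d = 4 then i else 0) d"
      using i' by (cases "d = 2 \<or> d = 4 \<or> d = 6 \<or> d = 8 \<or> d = 10") (auto simp: vt PT2_cnt[OF C(1)] C(2) pow2)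
  qed
  then show ?thesis using vp by blast
qed


theorem mainTheorem11:
  shows
  "(\<forall>P. vs_partition P \<and> (\<forall>V\<in>P. even (vec.dim V)) \<longrightarrow>
       vs_type P = (\<lambda>d. if d = 10 then 1 else 0)
     \<or> vs_type P = (\<lambda>d. if d = 2 then 256 else if d = 8 then 1 else 0)
     \<or> (\<exists>i::nat. i \<le> 64 \<and>
          vs_type P = (\<lambda>d. if d = 2 then 320 - 5 * i else if d = 4 then i
                           else if d = 6 then 1 else 0))
     \<or> (\<exists>i::nat. i \<le> 66 \<and>
          vs_type P = (\<lambda>d. if d = 2 then 341 - 5 * i else if d = 4 then i else 0)))
   \<and> (\<exists>P. vs_partition P \<and> vs_type P = (\<lambda>d. if d = 10 then 1 else 0))
   \<and> (\<exists>P. vs_partition P \<and> vs_type P = (\<lambda>d. if d = 2 then 256 else if d = 8 then 1 else 0))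
   \<and> (\<forall>i::nat. i \<le> 64 \<longrightarrow> (\<exists>P. vs_partition P \<and>
          vs_type P = (\<lambda>d. if d = 2 then 320 - 5 * i else if d = 4 then i
                           else if d = 6 then 1 else 0)))
   \<and> (\<forall>i::nat. i \<le> 65 \<longrightarrow> (\<exists>P. vs_partition P \<and>
          vs_type P = (\<lambda>d. if d = 2 then 341 - 5 * i else if d = 4 then i else 0)))"
    using classify ex10 ex8 ex6 ex4 by blast

end
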